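(* Let $n\ge1$ and let $\mathcal{L}$ be the vertex labeling of the linear representation of some linked cycle on $[n]$. Let $LC_n(\mathcal{L})$ be the set of linked cycles on $[n]$ whose linear representation has vertex labeling $\mathcal{L}$. Call the vertices of $\mathcal{L}$ labeled $i^{(j)}$ with $j\ge1$ that are not isolated points left endpoints, and the vertices labeled $i^{(0)}$ right endpoints. For a left endpoint $v$ let $h(v)$ be the number of right endpoints to the right of $v$ minus the number of left endpoints to the right of $v$. Then $$\sum_{\hat\pi\in LC_n(\mathcal{L})}x^{cr_2(\hat\pi)}y^{ne_2(\hat\pi)}=\sum_{\hat\pi\in LC_n(\mathcal{L})}x^{ne_2(\hat\pi)}y^{cr_2(\hat\pi)}=\prod_{v}\left(x^{h(v)-1}+x^{h(v)-2}y+\cdots+xy^{h(v)-2}+y^{h(v)-1}\right),$$ the product being over all left endpoints $v$ of $\mathcal{L}$. In particular $cr_2$ and $ne_2$ have a symmetric joint distribution over $LC_n(\mathcal{L})$.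
   Context: Two finite sets of integers $E,F$ are nearly disjoint if for every $i\in E\cap F$ either ($i=\min(E)$, $|E|>1$, $i\ne\min(F)$) or ($i=\min(F)$, $|F|>1$, $i\ne\min(E)$). A linked partition of $[n]$ is a set of nonempty subsets (blocks) of $[n]$ with union $[n]$, any two distinct blocks nearly disjoint; each element lies in one or two blocks (singly/doubly covered). A linked cycle on $[n]$ is a linked partition of $[n]$ with a cyclic arrangement of each block; a cycle is written $(i_1i_2\dots i_t)$ with $i_1$ its minimum. Linear representation of a linked cycle $\hat\pi$: for each $i\in[n]$ create vertices: if $i$ is singly covered and the minimum of its cycle, of size $k+1$, create $i^{(1)},\dots,i^{(k)}$ if $k\ge1$, and a single isolated vertex $i^{(1)}$ if $k=0$; if $i$ is singly covered and not the minimum of its cycle, create $i^{(0)}$; if $i$ is doubly covered and the minimum of a cycle of size $k+1$, create $i^{(0)},i^{(1)},\dots,i^{(k)}$. Vertices lie on a line ordered by $i$, then by superscript. For each cycle $(i_1\dots i_t)$, $t\ge2$, draw arcs $(i_1^{(j)},i_{t+1-j}^{(0)})$, $j=1,\dots,t-1$. The vertex labeling is the left-to-right sequence of vertex labels. Two arcs $(x_1,y_1),(x_2,y_2)$ form a 2-crossing if the vertices appear in the order $x_1,x_2,y_1,y_2$, and a 2-nesting if in the order $x_1,x_2,y_2,y_1$; $cr_2(\hat\pi)$, $ne_2(\hat\pi)$ are the numbers of these. *)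

theory Defs
  imports Main "HOL-Library.Product_Lexorder"
begin

definition nearly_disjoint :: "nat set \<Rightarrow> nat set \<Rightarrow> bool" where
  "nearly_disjoint E F \<longleftrightarrow>
     (\<forall>i \<in> E \<inter> F.
        (i = Min E \<and> card E > 1 \<and> i \<noteq> Min F) \<or>
        (i = Min F \<and> card F > 1 \<and> i \<noteq> Min E))"

definition linked_partition :: "nat \<Rightarrow> nat set set \<Rightarrow> bool" where
  "linked_partition n P \<longleftrightarrow>
     (\<forall>B \<in> P. B \<noteq> {} \<and> B \<subseteq> {1..n}) \<and> \<Union>P = {1..n} \<and>
     (\<forall>E \<in> P. \<forall>F \<in> P. E \<noteq> F \<longrightarrow> nearly_disjoint E F)"

text \<open>A cycle (i_1 i_2 ... i_t) is represented by the list [i_1, ..., i_t] of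
  distinct elements, written starting with its minimum i_1.\<close>
definition is_cycle :: "nat list \<Rightarrow> bool" where
  "is_cycle c \<longleftrightarrow> c \<noteq> [] \<and> distinct c \<and> hd c = Min (set c)"

definition linked_cycle :: "nat \<Rightarrow> nat list set \<Rightarrow> bool" where
  "linked_cycle n C \<longleftrightarrow>
     (\<forall>c \<in> C. is_cycle c) \<and> inj_on set C \<and> linked_partition n (set ` C)"

text \<open>Linear representation.  Vertex i^(j) is the pair (i, j); vertices are ordered
  by i, then by the superscript j (lexicographic order on pairs).\<close>
definition cycles_containing :: "nat list set \<Rightarrow> nat \<Rightarrow> nat list set" where
  "cycles_containing C i = {c \<in> C. i \<in> set c}"

definition singly_covered :: "nat list set \<Rightarrow> nat \<Rightarrow> bool" where
  "singly_covered C i \<longleftrightarrow> card (cycles_containing C i) = 1"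

definition doubly_covered :: "nat list set \<Rightarrow> nat \<Rightarrow> bool" where
  "doubly_covered C i \<longleftrightarrow> card (cycles_containing C i) = 2"

definition is_cycle_min :: "nat list set \<Rightarrow> nat \<Rightarrow> bool" where
  "is_cycle_min C i \<longleftrightarrow> (\<exists>c \<in> C. hd c = i)"

text \<open>The cycle whose minimum is i (unique in a linked cycle).\<close>
definition min_cycle :: "nat list set \<Rightarrow> nat \<Rightarrow> nat list" where
  "min_cycle C i = (THE c. c \<in> C \<and> hd c = i)"

definition verts_of :: "nat list set \<Rightarrow> nat \<Rightarrow> (nat \<times> nat) set" where
  "verts_of C i =
     (let k = length (min_cycle C i) - 1 in
      if singly_covered C i \<and> is_cycle_min C i then
        (if k \<ge> 1 then {(i, j) | j. 1 \<le> j \<and> j \<le> k} else {(i, 1)})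
      else if singly_covered C i \<and> \<not> is_cycle_min C i then {(i, 0)}
      else if doubly_covered C i \<and> is_cycle_min C i then {(i, j) | j. j \<le> k}
      else {})"

definition lin_vertices :: "nat \<Rightarrow> nat list set \<Rightarrow> (nat \<times> nat) set" where
  "lin_vertices n C = (\<Union>i \<in> {1..n}. verts_of C i)"

definition isolated_vertices :: "nat list set \<Rightarrow> (nat \<times> nat) set" where
  "isolated_vertices C = {(hd c, 1) | c. c \<in> C \<and> length c = 1}"

text \<open>Arcs: for each cycle (i_1 ... i_t), t \<ge> 2, the arcs (i_1^(j), i_(t+1-j)^(0)),
  j = 1..t-1.  With 0-based list indexing, i_(t+1-j) = c ! (t - j).\<close>
definition lin_arcs :: "nat list set \<Rightarrow> ((nat \<times> nat) \<times> (nat \<times> nat)) set" where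
  "lin_arcs C = {((hd c, j), (c ! (length c - j), 0)) | c j.
                   c \<in> C \<and> 2 \<le> length c \<and> 1 \<le> j \<and> j \<le> length c - 1}"

definition cr2 :: "nat list set \<Rightarrow> nat" where
  "cr2 C = card {(a, b). a \<in> lin_arcs C \<and> b \<in> lin_arcs C \<and>
                         fst a < fst b \<and> fst b < snd a \<and> snd a < snd b}"

definition ne2 :: "nat list set \<Rightarrow> nat" where
  "ne2 C = card {(a, b). a \<in> lin_arcs C \<and> b \<in> lin_arcs C \<and>
                         fst a < fst b \<and> fst b < snd b \<and> snd b < snd a}"

text \<open>Vertex labeling: the left-to-right sequence of vertex labels.  Each label
  (i, j, iso) records the vertex i^(j) and whether it is drawn as an isolated point.\<close>
definition vertex_labeling :: "nat \<Rightarrow> nat list set \<Rightarrow> (nat \<times> nat \<times> bool) list" where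
  "vertex_labeling n C =
     map (\<lambda>v. (fst v, snd v, v \<in> isolated_vertices C)) (sorted_list_of_set (lin_vertices n C))"

definition LC :: "nat \<Rightarrow> (nat \<times> nat \<times> bool) list \<Rightarrow> nat list set set" where
  "LC n L = {C. linked_cycle n C \<and> vertex_labeling n C = L}"

definition is_left_end :: "(nat \<times> nat \<times> bool) \<Rightarrow> bool" where
  "is_left_end l \<longleftrightarrow> fst (snd l) \<ge> 1 \<and> \<not> snd (snd l)"

definition is_right_end :: "(nat \<times> nat \<times> bool) \<Rightarrow> bool" where
  "is_right_end l \<longleftrightarrow> fst (snd l) = 0"

definition hval :: "(nat \<times> nat \<times> bool) list \<Rightarrow> nat \<Rightarrow> int" where
  "hval L p = int (card {q. p < q \<and> q < length L \<and> is_right_end (L ! q)})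
            - int (card {q. p < q \<and> q < length L \<and> is_left_end (L ! q)})"

definition hpoly :: "int \<Rightarrow> 'a::comm_ring_1 \<Rightarrow> 'a \<Rightarrow> 'a" where
  "hpoly h x y = (\<Sum>k \<in> {0..h - 1}. x ^ nat (h - 1 - k) * y ^ nat k)"

end

theory Submission
  imports Defs
begin
definition matchings :: "('v::linorder) set \<Rightarrow> 'v set \<Rightarrow> ('v \<times> 'v) set set" where
  "matchings A B = {M. M \<subseteq> A \<times> B \<and> (\<forall>a\<in>M. fst a < snd a) \<and>
      (\<forall>l\<in>A. \<exists>!r. (l,r) \<in> M) \<and> (\<forall>r\<in>B. \<exists>!l. (l,r) \<in> M)}"

definition crs :: "('v::linorder \<times> 'v) set \<Rightarrow> nat" where
  "crs M = card {(a, b). a \<in> M \<and> b \<in> M \<and> fst a < fst b \<and> fst b < snd a \<and> snd a < snd b}"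

definition nes :: "('v::linorder \<times> 'v) set \<Rightarrow> nat" where
  "nes M = card {(a, b). a \<in> M \<and> b \<in> M \<and> fst a < fst b \<and> fst b < snd b \<and> snd b < snd a}"

definition habs :: "'v::linorder set \<Rightarrow> 'v set \<Rightarrow> 'v \<Rightarrow> int" where
  "habs A B v = int (card {r\<in>B. v < r}) - int (card {l\<in>A. v < l})"

lemma hpoly_nat: "hpoly (int h) x y = (\<Sum>k<h. x ^ (h - 1 - k) * y ^ k)"
proof -
  have e: "{0..int h - 1} = int ` {..<h}"
    by (auto simp: image_iff) (metis atLeastAtMost_iff lessThan_iff nat_less_iff zle_diff1_eq nat_eq_iff2 not_less zless_nat_eq_int_zless)
  show ?thesis unfolding hpoly_def e
    by (subst sum.reindex) (auto intro!: sum.cong simp: nat_diff_distrib)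
qed

lemma hpoly_sym: "hpoly h x y = hpoly h y x"
proof (cases "h \<le> 0")
  case True
  then show ?thesis unfolding hpoly_def by simp
next
  case False
  then obtain m where m: "h = int m" by (metis nat_0_le not_le order_less_imp_le)
  have "(\<Sum>k<m. x ^ (m - 1 - k) * y ^ k) = (\<Sum>k<m. x ^ (m - 1 - (m - Suc k)) * y ^ (m - Suc k))"
    by (rule sum.nat_diff_reindex[symmetric])
  also have "\<dots> = (\<Sum>k<m. y ^ (m - 1 - k) * x ^ k)"
    by (intro sum.cong) (auto simp: mult.commute)
  finally show ?thesis unfolding m hpoly_nat .
qed

lemma rank_sum:
  fixes W :: "'v::linorder set" and x y :: "'a::comm_ring_1"
  assumes "finite W"
  shows "(\<Sum>w\<in>W. x ^ card {z\<in>W. z < w} * y ^ card {z\<in>W. w < z}) = (\<Sum>k<card W. x ^ (card W - 1 - k) * y ^ k)"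
  using assms
proof (induction W rule: finite_linorder_max_induct)
  case empty
  then show ?case by simp
next
  case (insert b A)
  have bA: "b \<notin> A" using insert by auto
  have s1: "{z\<in>insert b A. z < b} = A" using insert by auto
  have s2: "{z\<in>insert b A. b < z} = {}" using insert by auto
  have "(\<Sum>w\<in>insert b A. x ^ card {z\<in>insert b A. z < w} * y ^ card {z\<in>insert b A. w < z})
     = x ^ card A + (\<Sum>w\<in>A. x ^ card {z\<in>insert b A. z < w} * y ^ card {z\<in>insert b A. w < z})"
    using insert(1) bA by (subst sum.insert; simp only: s1 s2 card.empty power_0 mult_1_right)
  also have "(\<Sum>w\<in>A. x ^ card {z\<in>insert b A. z < w} * y ^ card {z\<in>insert b A. w < z})
     = (\<Sum>w\<in>A. y * (x ^ card {z\<in>A. z < w} * y ^ card {z\<in>A. w < z}))"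
  proof (intro sum.cong refl)
    fix w assume w: "w \<in> A"
    have "{z\<in>insert b A. z < w} = {z\<in>A. z < w}" using w insert by auto
    moreover have "{z\<in>insert b A. w < z} = insert b {z\<in>A. w < z}" using w insert by auto
    moreover have "finite {z\<in>A. w < z}" using insert by auto
    ultimately show "x ^ card {z\<in>insert b A. z < w} * y ^ card {z\<in>insert b A. w < z} =
          y * (x ^ card {z\<in>A. z < w} * y ^ card {z\<in>A. w < z})"
      using bA by (simp add: mult_ac)
  qed
  also have "\<dots> = y * (\<Sum>k<card A. x ^ (card A - 1 - k) * y ^ k)"
    using insert(3) by (simp only: sum_distrib_left[symmetric])
  also have "x ^ card A + \<dots> = (\<Sum>k<Suc (card A). x ^ (card A - k) * y ^ k)"
    by (subst sum.lessThan_Suc_shift) (auto simp: sum_distrib_left mult_ac intro!: sum.cong)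
  finally show ?case using insert bA by simp
qed

lemma matchingsD:
  assumes "M \<in> matchings A B"
  shows "M \<subseteq> A \<times> B" "\<And>a. a \<in> M \<Longrightarrow> fst a < snd a"
    "\<And>l. l \<in> A \<Longrightarrow> \<exists>!r. (l,r) \<in> M" "\<And>r. r \<in> B \<Longrightarrow> \<exists>!l. (l,r) \<in> M"
  using assms unfolding matchings_def by auto

lemma matchings_finite: "finite A \<Longrightarrow> finite B \<Longrightarrow> finite (matchings A B)"
  by (rule finite_subset[of _ "Pow (A \<times> B)"]) (auto simp: matchings_def)

lemma matching_inj_snd:
  assumes "M \<in> matchings A B" shows "inj_on snd M"
proof
  fix a b assume ab: "a \<in> M" "b \<in> M" "snd a = snd b"
  have "snd a \<in> B" using matchingsD(1)[OF assms] ab by auto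
  then have "\<exists>!l. (l, snd a) \<in> M" using matchingsD(4)[OF assms] by auto
  then show "a = b" using ab by (metis prod.collapse)
qed

lemma matching_inj_fst:
  assumes "M \<in> matchings A B" shows "inj_on fst M"
proof
  fix a b assume ab: "a \<in> M" "b \<in> M" "fst a = fst b"
  have "fst a \<in> A" using matchingsD(1)[OF assms] ab by auto
  then have "\<exists>!r. (fst a, r) \<in> M" using matchingsD(3)[OF assms] by auto
  then show "a = b" using ab by (metis prod.collapse)
qed

lemma matching_snd_image: assumes "M \<in> matchings A B" shows "snd ` M = B"
proof
  show "snd ` M \<subseteq> B" using matchingsD(1)[OF assms] by auto
  show "B \<subseteq> snd ` M"
  proof
    fix r assume "r \<in> B"
    then obtain l where "(l, r) \<in> M" using matchingsD(4)[OF assms] by blast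
    then show "r \<in> snd ` M" by force
  qed
qed

lemma matching_fst_image: assumes "M \<in> matchings A B" shows "fst ` M = A"
proof
  show "fst ` M \<subseteq> A" using matchingsD(1)[OF assms] by auto
  show "A \<subseteq> fst ` M"
  proof
    fix l assume "l \<in> A"
    then obtain r where "(l, r) \<in> M" using matchingsD(3)[OF assms] by blast
    then show "l \<in> fst ` M" by force
  qed
qed

lemma card_filter_snd:
  assumes "M \<in> matchings A B"
  shows "card {a\<in>M. P (snd a)} = card {z\<in>B. P z}"
proof -
  have "snd ` {a\<in>M. P (snd a)} = {z\<in>B. P z}"
    using matching_snd_image[OF assms] by auto
  moreover have "inj_on snd {a\<in>M. P (snd a)}"
    using matching_inj_snd[OF assms] by (auto intro: inj_on_subset)
  ultimately show ?thesis by (metis card_image)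
qed

lemma crs_insert:
  assumes fin: "finite M" and lt: "\<forall>a\<in>M. fst a < v" and e: "e = (v, w)" and nin: "e \<notin> M"
  shows "crs (insert e M) = crs M + card {a\<in>M. v < snd a \<and> snd a < w}"
proof -
  let ?S = "\<lambda>M. {(a, b). a \<in> M \<and> b \<in> M \<and> fst a < fst b \<and> fst b < snd a \<and> snd a < snd b}"
  have eq: "?S (insert e M) = ?S M \<union> (\<lambda>a. (a, e)) ` {a\<in>M. v < snd a \<and> snd a < w}"
    using lt e by (auto simp: image_iff)
  have "finite (?S M)" by (rule finite_subset[of _ "M \<times> M"]) (use fin in auto)
  moreover have "?S M \<inter> (\<lambda>a. (a, e)) ` {a\<in>M. v < snd a \<and> snd a < w} = {}" using nin by auto
  moreover have "card ((\<lambda>a. (a, e)) ` {a\<in>M. v < snd a \<and> snd a < w}) = card {a\<in>M. v < snd a \<and> snd a < w}"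
    by (rule card_image) (auto simp: inj_on_def)
  ultimately show ?thesis unfolding crs_def eq using fin by (simp add: card_Un_disjoint)
qed

lemma nes_insert:
  assumes fin: "finite M" and lt: "\<forall>a\<in>M. fst a < v" and e: "e = (v, w)" and nin: "e \<notin> M"
    and vw: "v < w"
  shows "nes (insert e M) = nes M + card {a\<in>M. w < snd a}"
proof -
  let ?S = "\<lambda>M. {(a, b). a \<in> M \<and> b \<in> M \<and> fst a < fst b \<and> fst b < snd b \<and> snd b < snd a}"
  have eq: "?S (insert e M) = ?S M \<union> (\<lambda>a. (a, e)) ` {a\<in>M. w < snd a}"
    using lt e vw by (auto simp: image_iff)
  have "finite (?S M)" by (rule finite_subset[of _ "M \<times> M"]) (use fin in auto)
  moreover have "?S M \<inter> (\<lambda>a. (a, e)) ` {a\<in>M. w < snd a} = {}" using nin by auto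
  moreover have "card ((\<lambda>a. (a, e)) ` {a\<in>M. w < snd a}) = card {a\<in>M. w < snd a}"
    by (rule card_image) (auto simp: inj_on_def)
  ultimately show ?thesis unfolding nes_def eq using fin by (simp add: card_Un_disjoint)
qed

lemma matchings_insert_max:
  assumes lt: "\<forall>a\<in>A. a < b"
  shows "matchings (insert b A) B =
     (\<lambda>(w, M'). insert (b, w) M') ` (SIGMA w:{w\<in>B. b < w}. matchings A (B - {w}))"
proof -
  have bA: "b \<notin> A" using lt by auto
  show ?thesis
  proof (rule set_eqI, rule iffI)
    fix M assume M: "M \<in> matchings (insert b A) B"
    obtain w where w: "(b, w) \<in> M" using matchingsD(3)[OF M] by blast
    have wB: "w \<in> B" and bw: "b < w" using w matchingsD(1,2)[OF M] by auto
    let ?M' = "M - {(b, w)}"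
    have "?M' \<in> matchings A (B - {w})"
      unfolding matchings_def
    proof (intro CollectI conjI ballI)
      show "?M' \<subseteq> A \<times> (B - {w})"
      proof
        fix p assume p: "p \<in> ?M'"
        obtain l r where pr: "p = (l, r)" by fastforce
        have "l \<in> insert b A" "r \<in> B" using p pr matchingsD(1)[OF M] by auto
        moreover have "l \<noteq> b" using p pr w matchingsD(3)[OF M, of b] by auto
        moreover have "r \<noteq> w" using p pr w wB matchingsD(4)[OF M, of w] by auto
        ultimately show "p \<in> A \<times> (B - {w})" using pr by auto
      qed
      show "\<And>a. a \<in> ?M' \<Longrightarrow> fst a < snd a" using matchingsD(2)[OF M] by auto
      fix l assume l: "l \<in> A"
      then obtain r where r: "(l, r) \<in> M" using matchingsD(3)[OF M] by blast
      have "(l, r) \<noteq> (b, w)" using l bA by auto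
      then show "\<exists>!r. (l, r) \<in> ?M'" using r matchingsD(3)[OF M, of l] l by auto
    next
      fix r assume r: "r \<in> B - {w}"
      then obtain l where l: "(l, r) \<in> M" using matchingsD(4)[OF M] by blast
      have "(l, r) \<noteq> (b, w)" using r by auto
      then show "\<exists>!l. (l, r) \<in> ?M'" using l matchingsD(4)[OF M, of r] r by auto
    qed
    note M'm = this
    show "M \<in> (\<lambda>(w, M'). insert (b, w) M') ` (SIGMA w:{w\<in>B. b < w}. matchings A (B - {w}))"
    proof (rule image_eqI[of _ _ "(w, ?M')"])
      show "M = (\<lambda>(w, M'). insert (b, w) M') (w, ?M')" using w by auto
      show "(w, ?M') \<in> (SIGMA w:{w\<in>B. b < w}. matchings A (B - {w}))" using M'm wB bw by auto
    qed
  next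
    fix M assume "M \<in> (\<lambda>(w, M'). insert (b, w) M') ` (SIGMA w:{w\<in>B. b < w}. matchings A (B - {w}))"
    then obtain w M' where wB: "w \<in> B" and bw: "b < w" and M': "M' \<in> matchings A (B - {w})"
      and M: "M = insert (b, w) M'" by auto
    note D = matchingsD[OF M']
    show "M \<in> matchings (insert b A) B"
      unfolding matchings_def
    proof (intro CollectI conjI ballI)
      show "M \<subseteq> insert b A \<times> B" using D(1) wB M by auto
      show "\<And>a. a \<in> M \<Longrightarrow> fst a < snd a" using D(2) M bw by auto
      fix l assume l: "l \<in> insert b A"
      show "\<exists>!r. (l, r) \<in> M"
      proof (cases "l = b")
        case True
        then show ?thesis using M D(1) bA by auto
      next
        case False
        then have "l \<in> A" using l by auto
        then show ?thesis using D(3)[of l] M False by auto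
      qed
    next
      fix r assume r: "r \<in> B"
      show "\<exists>!l. (l, r) \<in> M"
      proof (cases "r = w")
        case True
        then show ?thesis using M D(1) by auto
      next
        case False
        then have "r \<in> B - {w}" using r by auto
        then show ?thesis using D(4)[of r] M False by auto
      qed
    qed
  qed
qed

lemma matchings_insert_inj:
  assumes lt: "\<forall>a\<in>A. a < b"
  shows "inj_on (\<lambda>(w, M'). insert (b, w) M') (SIGMA w:{w\<in>B. b < w}. matchings A (B - {w}))"
proof (rule inj_onI, clarify)
  fix w M1 w' M2
  assume a: "w \<in> B" "b < w" "M1 \<in> matchings A (B - {w})" "w' \<in> B" "b < w'" "M2 \<in> matchings A (B - {w'})"
    and eq: "insert (b, w) M1 = insert (b, w') M2"
  have n1: "\<And>r. (b, r) \<notin> M1" using matchingsD(1)[OF a(3)] lt by auto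
  have n2: "\<And>r. (b, r) \<notin> M2" using matchingsD(1)[OF a(6)] lt by auto
  have "(b, w') \<in> insert (b, w) M1" using eq by auto
  then have ww: "w = w'" using n1 by auto
  have "M1 = insert (b, w) M1 - {(b, w)}" using n1 by auto
  also have "\<dots> = M2" using eq ww n2 by auto
  finally show "w = w' \<and> M1 = M2" using ww by simp
qed

lemma match_gf:
  fixes A :: "'v::linorder set" and x y :: "'a::comm_ring_1"
  assumes "finite A"
  shows "finite B \<Longrightarrow> card A = card B \<Longrightarrow>
    (\<Sum>M\<in>matchings A B. x ^ crs M * y ^ nes M) = (\<Prod>v\<in>A. hpoly (habs A B v) x y)"
  using assms
proof (induction A arbitrary: B rule: finite_linorder_max_induct)
  case empty
  then have "B = {}" by simp
  moreover have "matchings ({}::'v set) {} = {{}}" by (auto simp: matchings_def)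
  ultimately show ?case by (simp add: crs_def nes_def)
next
  case (insert b A)
  have bA: "b \<notin> A" using insert by auto
  let ?W = "{w\<in>B. b < w}"
  let ?g = "\<lambda>M. x ^ crs M * y ^ nes M"
  have finW: "finite ?W" using insert by auto
  have "(\<Sum>M\<in>matchings (insert b A) B. ?g M) =
     (\<Sum>p\<in>(SIGMA w:?W. matchings A (B - {w})). ?g ((\<lambda>(w, M'). insert (b, w) M') p))"
    unfolding matchings_insert_max[OF insert(2)]
    by (rule sum.reindex[OF matchings_insert_inj[OF insert(2)], unfolded comp_def])
  also have "\<dots> = (\<Sum>w\<in>?W. \<Sum>M'\<in>matchings A (B - {w}). ?g (insert (b, w) M'))"
  proof -
    have fm: "\<forall>w\<in>?W. finite (matchings A (B - {w}))" using matchings_finite[OF insert(1)] insert.prems(1) by blast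
    show ?thesis
      using sum.Sigma[OF finW fm, of "\<lambda>w M'. ?g (insert (b, w) M')"]
      by (simp add: case_prod_unfold)
  qed
  also have "\<dots> = (\<Sum>w\<in>?W. (x ^ card {z\<in>?W. z < w} * y ^ card {z\<in>?W. w < z}) *
                         (\<Prod>v\<in>A. hpoly (habs (insert b A) B v) x y))"
  proof (rule sum.cong[OF refl])
    fix w assume w: "w \<in> ?W"
    have cardB: "card A = card (B - {w})" using insert w by auto
    have "(\<Sum>M'\<in>matchings A (B - {w}). ?g (insert (b, w) M')) =
          (\<Sum>M'\<in>matchings A (B - {w}). (x ^ card {z\<in>?W. z < w} * y ^ card {z\<in>?W. w < z}) * ?g M')"
    proof (rule sum.cong[OF refl])
      fix M' assume M': "M' \<in> matchings A (B - {w})"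
      have finM: "finite M'" using matchingsD(1)[OF M'] insert
        by (auto intro: finite_subset[of _ "A \<times> B"])
      have ltb: "\<forall>a\<in>M'. fst a < b" using matchingsD(1)[OF M'] insert(2) by auto
      have nin: "(b, w) \<notin> M'" using ltb by auto
      have c1: "card {a\<in>M'. b < snd a \<and> snd a < w} = card {z\<in>?W. z < w}"
      proof -
        have "{z\<in>B - {w}. b < z \<and> z < w} = {z\<in>?W. z < w}" by auto
        then show ?thesis using card_filter_snd[OF M', of "\<lambda>z. b < z \<and> z < w"] by simp
      qed
      have c2: "card {a\<in>M'. w < snd a} = card {z\<in>?W. w < z}"
      proof -
        have "{z\<in>B - {w}. w < z} = {z\<in>?W. w < z}" using w by auto
        then show ?thesis using card_filter_snd[OF M', of "\<lambda>z. w < z"] by simp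
      qed
      show "?g (insert (b, w) M') = (x ^ card {z\<in>?W. z < w} * y ^ card {z\<in>?W. w < z}) * ?g M'"
        using crs_insert[OF finM ltb refl nin] nes_insert[OF finM ltb refl nin] w c1 c2
        by (simp add: power_add mult_ac)
    qed
    also have "\<dots> = (x ^ card {z\<in>?W. z < w} * y ^ card {z\<in>?W. w < z}) *
                     (\<Prod>v\<in>A. hpoly (habs A (B - {w}) v) x y)"
    proof -
      have IH: "(\<Sum>M\<in>matchings A (B - {w}). ?g M) = (\<Prod>v\<in>A. hpoly (habs A (B - {w}) v) x y)"
        using insert.IH[of "B - {w}"] insert.prems cardB by simp
      show ?thesis unfolding sum_distrib_left[symmetric] IH ..
    qed
    also have "(\<Prod>v\<in>A. hpoly (habs A (B - {w}) v) x y) = (\<Prod>v\<in>A. hpoly (habs (insert b A) B v) x y)"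
    proof (rule prod.cong[OF refl])
      fix v assume v: "v \<in> A"
      have vb: "v < b" using v insert(2) by auto
      have e1: "{r\<in>B. v < r} = insert w {r\<in>B - {w}. v < r}" using w vb by auto
      have e2: "{l\<in>insert b A. v < l} = insert b {l\<in>A. v < l}" using vb by auto
      have "card {r\<in>B. v < r} = Suc (card {r\<in>B - {w}. v < r})"
        unfolding e1 by (rule card_insert_disjoint) (use insert.prems(1) in auto)
      moreover have "card {l\<in>insert b A. v < l} = Suc (card {l\<in>A. v < l})"
        unfolding e2 by (rule card_insert_disjoint) (use insert(1) bA in auto)
      ultimately show "hpoly (habs A (B - {w}) v) x y = hpoly (habs (insert b A) B v) x y"
        unfolding habs_def by simp
    qed
    finally show "(\<Sum>M'\<in>matchings A (B - {w}). ?g (insert (b, w) M')) =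
       (x ^ card {z\<in>?W. z < w} * y ^ card {z\<in>?W. w < z}) * (\<Prod>v\<in>A. hpoly (habs (insert b A) B v) x y)" .
  qed
  also have "\<dots> = hpoly (int (card ?W)) x y * (\<Prod>v\<in>A. hpoly (habs (insert b A) B v) x y)"
    unfolding hpoly_nat sum_distrib_right[symmetric] rank_sum[OF finW] ..
  also have "habs (insert b A) B b = int (card ?W)"
  proof -
    have "{l\<in>insert b A. b < l} = {}" using insert(2) by auto
    then show ?thesis unfolding habs_def by (simp only: card.empty)
  qed
  then have "hpoly (int (card ?W)) x y * (\<Prod>v\<in>A. hpoly (habs (insert b A) B v) x y)
       = (\<Prod>v\<in>insert b A. hpoly (habs (insert b A) B v) x y)"
    using insert(1) bA by simp
  finally show ?case .
qed

definition Hs :: "nat list set \<Rightarrow> nat set" where "Hs C = hd ` C"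
definition Ts :: "nat list set \<Rightarrow> nat set" where "Ts C = (\<Union>c\<in>C. set (tl c))"
definition klen :: "nat list set \<Rightarrow> nat \<Rightarrow> nat" where "klen C i = length (min_cycle C i) - 1"

lemma cyc_tl_gt: "is_cycle c \<Longrightarrow> z \<in> set (tl c) \<Longrightarrow> hd c < z"
proof -
  assume c: "is_cycle c" and z: "z \<in> set (tl c)"
  have ne: "c \<noteq> []" and d: "distinct c" and m: "hd c = Min (set c)" using c unfolding is_cycle_def by auto
  have zc: "z \<in> set c" using z ne by (cases c) auto
  have "Min (set c) \<le> z" using zc by (intro Min_le) auto
  moreover have "hd c \<noteq> z" using z d ne by (cases c) auto
  ultimately show ?thesis using m by simp
qed

lemma cyc_set: "is_cycle c \<Longrightarrow> set c = insert (hd c) (set (tl c))"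
  unfolding is_cycle_def by (cases c) auto

lemma cyc_hd_notin: "is_cycle c \<Longrightarrow> hd c \<notin> set (tl c)"
  using cyc_tl_gt by blast

lemma cyc_Min: "is_cycle c \<Longrightarrow> Min (set c) = hd c"
  unfolding is_cycle_def by auto

lemma nd_E: "nearly_disjoint E F \<Longrightarrow> i \<in> E \<Longrightarrow> i \<in> F \<Longrightarrow>
   (i = Min E \<and> card E > 1 \<and> i \<noteq> Min F) \<or> (i = Min F \<and> card F > 1 \<and> i \<noteq> Min E)"
  unfolding nearly_disjoint_def by blast

definition VV :: "nat set \<Rightarrow> nat set \<Rightarrow> (nat \<Rightarrow> nat) \<Rightarrow> (nat \<times> nat) set" where
  "VV H T k = {(i, 0) | i. i \<in> T} \<union> {(i, j) | i j. i \<in> H \<and> 1 \<le> j \<and> j \<le> max 1 (k i)}"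

locale lcyc =
  fixes n :: nat and C :: "nat list set"
  assumes lc: "linked_cycle n C"
begin

lemma cyc: "c \<in> C \<Longrightarrow> is_cycle c"
  using lc unfolding linked_cycle_def by auto

lemma sub: "c \<in> C \<Longrightarrow> set c \<subseteq> {1..n}"
  using lc unfolding linked_cycle_def linked_partition_def by auto

lemma injset: "inj_on set C"
  using lc unfolding linked_cycle_def by auto

lemma nd: "c1 \<in> C \<Longrightarrow> c2 \<in> C \<Longrightarrow> c1 \<noteq> c2 \<Longrightarrow> nearly_disjoint (set c1) (set c2)"
proof -
  assume a: "c1 \<in> C" "c2 \<in> C" "c1 \<noteq> c2"
  have "set c1 \<noteq> set c2" using a injset unfolding inj_on_def by metis
  moreover have "\<forall>E \<in> set ` C. \<forall>F \<in> set ` C. E \<noteq> F \<longrightarrow> nearly_disjoint E F"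
    using lc unfolding linked_cycle_def linked_partition_def by simp
  ultimately show ?thesis using a by simp
qed

lemma union: "(\<Union>c\<in>C. set c) = {1..n}"
  using lc unfolding linked_cycle_def linked_partition_def by auto

lemma fin: "finite C"
proof -
  have "set ` C \<subseteq> Pow {1..n}" using sub by auto
  then have "finite (set ` C)" by (rule finite_subset) auto
  then show ?thesis using finite_imageD injset by blast
qed

lemma hd_inj: "c1 \<in> C \<Longrightarrow> c2 \<in> C \<Longrightarrow> hd c1 = hd c2 \<Longrightarrow> c1 = c2"
proof (rule ccontr)
  assume a: "c1 \<in> C" "c2 \<in> C" "hd c1 = hd c2" "c1 \<noteq> c2"
  have "hd c1 \<in> set c1" "hd c2 \<in> set c2" using cyc[OF a(1)] cyc[OF a(2)] cyc_set by blast+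
  then show False using nd_E[OF nd[OF a(1,2,4)], of "hd c1"] a(3) cyc_Min cyc a(1,2) by metis
qed

lemma tl_inj: "c1 \<in> C \<Longrightarrow> c2 \<in> C \<Longrightarrow> z \<in> set (tl c1) \<Longrightarrow> z \<in> set (tl c2) \<Longrightarrow> c1 = c2"
proof (rule ccontr)
  assume a: "c1 \<in> C" "c2 \<in> C" "z \<in> set (tl c1)" "z \<in> set (tl c2)" "c1 \<noteq> c2"
  have "z \<in> set c1" "z \<in> set c2" using a cyc cyc_set by blast+
  moreover have "z \<noteq> Min (set c1)" "z \<noteq> Min (set c2)"
    using a cyc cyc_Min cyc_hd_notin by metis+
  ultimately show False using nd_E[OF nd[OF a(1,2,5)], of z] by blast
qed

lemma hd_tl: "c1 \<in> C \<Longrightarrow> c2 \<in> C \<Longrightarrow> hd c1 \<in> set (tl c2) \<Longrightarrow> 2 \<le> length c1"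
proof -
  assume a: "c1 \<in> C" "c2 \<in> C" "hd c1 \<in> set (tl c2)"
  have ne: "c1 \<noteq> c2" using a cyc_hd_notin cyc by metis
  have "hd c1 \<in> set c1" "hd c1 \<in> set c2" using a cyc cyc_set by blast+
  moreover have "hd c1 \<noteq> Min (set c2)" using a cyc cyc_Min cyc_hd_notin by metis
  ultimately have "card (set c1) > 1" using nd_E[OF nd[OF a(1,2) ne], of "hd c1"] by blast
  then show ?thesis using cyc[OF a(1)] distinct_card unfolding is_cycle_def by fastforce
qed

lemma cover: "Hs C \<union> Ts C = {1..n}"
proof -
  have "(\<Union>c\<in>C. set c) = (\<Union>c\<in>C. insert (hd c) (set (tl c)))"
    using cyc cyc_set by (intro SUP_cong) auto
  also have "\<dots> = Hs C \<union> Ts C" unfolding Hs_def Ts_def by auto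
  finally show ?thesis using union by simp
qed

lemma HT_sub: "Hs C \<subseteq> {1..n}" "Ts C \<subseteq> {1..n}"
  using cover by auto

lemma min_cycle_eq: "c \<in> C \<Longrightarrow> min_cycle C (hd c) = c"
  unfolding min_cycle_def using hd_inj by (intro the_equality) auto

lemma min_cycle_in: "i \<in> Hs C \<Longrightarrow> min_cycle C i \<in> C \<and> hd (min_cycle C i) = i"
  unfolding Hs_def using min_cycle_eq by auto

lemma len_pos: "c \<in> C \<Longrightarrow> length c \<ge> 1"
  using cyc unfolding is_cycle_def by (cases c) auto

lemma card_hd: "card {c\<in>C. hd c = i} = (if i \<in> Hs C then 1 else 0)"
proof (cases "i \<in> Hs C")
  case True
  then obtain c where c: "c \<in> C" "hd c = i" unfolding Hs_def by auto
  then have "{c\<in>C. hd c = i} = {c}" using hd_inj by auto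
  then show ?thesis using True by simp
next
  case False
  then have "{c\<in>C. hd c = i} = {}" unfolding Hs_def by auto
  then show ?thesis using False by (metis card.empty)
qed

lemma card_tl: "card {c\<in>C. i \<in> set (tl c)} = (if i \<in> Ts C then 1 else 0)"
proof (cases "i \<in> Ts C")
  case True
  then obtain c where c: "c \<in> C" "i \<in> set (tl c)" unfolding Ts_def by auto
  then have "{c\<in>C. i \<in> set (tl c)} = {c}" using tl_inj by auto
  then show ?thesis using True by simp
next
  case False
  then have "{c\<in>C. i \<in> set (tl c)} = {}" unfolding Ts_def by auto
  then show ?thesis using False by (metis card.empty)
qed

lemma card_cc: "card (cycles_containing C i) = (if i \<in> Hs C then 1 else 0) + (if i \<in> Ts C then 1 else 0)"
proof -
  have "cycles_containing C i = {c\<in>C. hd c = i} \<union> {c\<in>C. i \<in> set (tl c)}"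
  proof (rule set_eqI)
    fix c show "c \<in> cycles_containing C i \<longleftrightarrow> c \<in> {c\<in>C. hd c = i} \<union> {c\<in>C. i \<in> set (tl c)}"
      unfolding cycles_containing_def using cyc_set[OF cyc, of c] by auto
  qed
  moreover have "{c\<in>C. hd c = i} \<inter> {c\<in>C. i \<in> set (tl c)} = {}"
    using cyc_hd_notin[OF cyc] by auto
  moreover have "finite {c\<in>C. hd c = i}" "finite {c\<in>C. i \<in> set (tl c)}" using fin by auto
  ultimately show ?thesis using card_hd card_tl by (simp add: card_Un_disjoint)
qed

lemma is_min_iff: "is_cycle_min C i \<longleftrightarrow> i \<in> Hs C"
  unfolding is_cycle_min_def Hs_def by auto

lemma klen_pos: "i \<in> Hs C \<Longrightarrow> i \<in> Ts C \<Longrightarrow> klen C i \<ge> 1"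
proof -
  assume a: "i \<in> Hs C" "i \<in> Ts C"
  obtain c where c: "c \<in> C" "hd c = i" using a unfolding Hs_def by auto
  obtain c2 where c2: "c2 \<in> C" "i \<in> set (tl c2)" using a unfolding Ts_def by auto
  have "2 \<le> length c" using hd_tl[OF c(1) c2(1)] c c2 by simp
  then show ?thesis unfolding klen_def using min_cycle_eq[OF c(1)] c by simp
qed


lemma verts: "i \<in> {1..n} \<Longrightarrow> verts_of C i =
   (if i \<in> Ts C then {(i, 0)} else {}) \<union> (if i \<in> Hs C then {(i, j) | j. 1 \<le> j \<and> j \<le> max 1 (klen C i)} else {})"
proof -
  assume i: "i \<in> {1..n}"
  have HT: "i \<in> Hs C \<or> i \<in> Ts C" using cover i by auto
  show ?thesis
  proof (cases "i \<in> Hs C")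
    case H: True
    show ?thesis
    proof (cases "i \<in> Ts C")
      case True
      have k: "klen C i \<ge> 1" using klen_pos H True by auto
      have "doubly_covered C i" "\<not> singly_covered C i" using card_cc H True
        unfolding doubly_covered_def singly_covered_def by auto
      then have "verts_of C i = {(i, j) | j. j \<le> klen C i}"
        unfolding verts_of_def klen_def Let_def using is_min_iff H by auto
      then show ?thesis using H True k by auto
    next
      case False
      have "singly_covered C i" using card_cc H False unfolding singly_covered_def by auto
      then show ?thesis unfolding verts_of_def klen_def[symmetric] Let_def using is_min_iff H False
        by (auto simp: max_def)
    qed
  next
    case False
    then have T: "i \<in> Ts C" using HT by auto
    have "singly_covered C i" using card_cc False T unfolding singly_covered_def by auto
    then show ?thesis unfolding verts_of_def Let_def using is_min_iff False T by auto
  qed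
qed

lemma lin_vertices_eq: "lin_vertices n C = VV (Hs C) (Ts C) (klen C)"
proof -
  have "lin_vertices n C = (\<Union>i\<in>{1..n}. (if i \<in> Ts C then {(i, 0)} else {}) \<union>
       (if i \<in> Hs C then {(i, j) | j. 1 \<le> j \<and> j \<le> max 1 (klen C i)} else {}))"
    unfolding lin_vertices_def using verts by auto
  also have "\<dots> = VV (Hs C) (Ts C) (klen C)"
    unfolding VV_def using HT_sub by (auto split: if_splits)
  finally show ?thesis .
qed

lemma iso_eq: "isolated_vertices C = {(i, 1) | i. i \<in> Hs C \<and> klen C i = 0}"
proof -
  have "\<And>c. c \<in> C \<Longrightarrow> klen C (hd c) = length c - 1"
    unfolding klen_def using min_cycle_eq by auto
  then show ?thesis unfolding isolated_vertices_def Hs_def using len_pos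
    by (auto simp: image_iff) (metis le_antisym diff_is_0_eq)+
qed

end

definition LfS :: "nat set \<Rightarrow> (nat \<Rightarrow> nat) \<Rightarrow> (nat \<times> nat) set" where
  "LfS H k = {(i, j) | i j. i \<in> H \<and> 1 \<le> j \<and> j \<le> k i}"
definition RtS :: "nat set \<Rightarrow> (nat \<times> nat) set" where
  "RtS T = {(i, 0) | i. i \<in> T}"

lemma tl_nth: "c \<noteq> [] \<Longrightarrow> z \<in> set (tl c) \<longleftrightarrow> (\<exists>m. 1 \<le> m \<and> m < length c \<and> c ! m = z)"
proof (cases c)
  case (Cons h t)
  have "z \<in> set t \<longleftrightarrow> (\<exists>m. 1 \<le> m \<and> m < length (h # t) \<and> (h # t) ! m = z)"
  proof
    assume "z \<in> set t"
    then obtain k where "k < length t" "t ! k = z" by (auto simp: in_set_conv_nth)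
    then show "\<exists>m. 1 \<le> m \<and> m < length (h # t) \<and> (h # t) ! m = z" by (intro exI[of _ "Suc k"]) auto
  next
    assume "\<exists>m. 1 \<le> m \<and> m < length (h # t) \<and> (h # t) ! m = z"
    then obtain m where m: "1 \<le> m" "m < length (h # t)" "(h # t) ! m = z" by blast
    then obtain k where k: "m = Suc k" by (cases m) auto
    show "z \<in> set t" using m k by (auto simp: in_set_conv_nth)
  qed
  then show ?thesis using Cons by simp
qed simp

context lcyc begin

lemma klen_len: "i \<in> Hs C \<Longrightarrow> length (min_cycle C i) = klen C i + 1"
  unfolding klen_def using min_cycle_in len_pos by fastforce

lemma arcs_eq: "lin_arcs C = {((i, j), (min_cycle C i ! (klen C i + 1 - j), 0::nat)) | i j.
     i \<in> Hs C \<and> 1 \<le> j \<and> j \<le> klen C i}"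
proof (rule set_eqI, rule iffI)
  fix a assume "a \<in> lin_arcs C"
  then obtain c j where a: "a = ((hd c, j), (c ! (length c - j), 0))" "c \<in> C" "2 \<le> length c"
    "1 \<le> j" "j \<le> length c - 1" unfolding lin_arcs_def by auto
  have "min_cycle C (hd c) = c" using min_cycle_eq a by auto
  moreover have "hd c \<in> Hs C" using a unfolding Hs_def by auto
  ultimately show "a \<in> {((i, j), (min_cycle C i ! (klen C i + 1 - j), 0::nat)) | i j.
     i \<in> Hs C \<and> 1 \<le> j \<and> j \<le> klen C i}" using a klen_len[of "hd c"] by auto
next
  fix a assume "a \<in> {((i, j), (min_cycle C i ! (klen C i + 1 - j), 0::nat)) | i j.
     i \<in> Hs C \<and> 1 \<le> j \<and> j \<le> klen C i}"
  then obtain i j where a: "a = ((i, j), (min_cycle C i ! (klen C i + 1 - j), 0::nat))" "i \<in> Hs C"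
     "1 \<le> j" "j \<le> klen C i" by auto
  let ?c = "min_cycle C i"
  have c: "?c \<in> C" "hd ?c = i" using min_cycle_in a by auto
  have l: "length ?c = klen C i + 1" using klen_len a by auto
  show "a \<in> lin_arcs C" unfolding lin_arcs_def
    using a c l by (auto intro!: exI[of _ ?c] exI[of _ j])
qed

lemma arcs_matching: "lin_arcs C \<in> matchings (LfS (Hs C) (klen C)) (RtS (Ts C))"
  unfolding matchings_def
proof (intro CollectI conjI ballI)
  show "lin_arcs C \<subseteq> LfS (Hs C) (klen C) \<times> RtS (Ts C)"
  proof
    fix a assume "a \<in> lin_arcs C"
    then obtain i j where a: "a = ((i, j), (min_cycle C i ! (klen C i + 1 - j), 0::nat))" "i \<in> Hs C"
      "1 \<le> j" "j \<le> klen C i" unfolding arcs_eq by auto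
    let ?c = "min_cycle C i"
    have c: "?c \<in> C" "hd ?c = i" using min_cycle_in a by auto
    have l: "length ?c = klen C i + 1" using klen_len a by auto
    have "?c ! (klen C i + 1 - j) \<in> set (tl ?c)"
      using tl_nth[of ?c] c l a cyc[OF c(1)] unfolding is_cycle_def
      by (metis Nat.add_diff_assoc2 add.commute add_le_cancel_left diff_add_inverse2 diff_le_self le_add2 le_add_diff_inverse less_Suc_eq_le plus_1_eq_Suc)
    then have "?c ! (klen C i + 1 - j) \<in> Ts C" using c unfolding Ts_def by auto
    then show "a \<in> LfS (Hs C) (klen C) \<times> RtS (Ts C)" using a unfolding LfS_def RtS_def by auto
  qed
next
  fix a assume "a \<in> lin_arcs C"
  then obtain i j where a: "a = ((i, j), (min_cycle C i ! (klen C i + 1 - j), 0::nat))" "i \<in> Hs C"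
    "1 \<le> j" "j \<le> klen C i" unfolding arcs_eq by auto
  let ?c = "min_cycle C i"
  have c: "?c \<in> C" "hd ?c = i" using min_cycle_in a by auto
  have l: "length ?c = klen C i + 1" using klen_len a by auto
  have "?c ! (klen C i + 1 - j) \<in> set (tl ?c)"
    using tl_nth[of ?c] c l a cyc[OF c(1)] unfolding is_cycle_def
    by (metis Nat.add_diff_assoc2 add.commute add_le_cancel_left diff_add_inverse2 diff_le_self le_add2 le_add_diff_inverse less_Suc_eq_le plus_1_eq_Suc)
  then have "i < ?c ! (klen C i + 1 - j)" using cyc_tl_gt cyc c by metis
  then show "fst a < snd a" using a by simp
next
  fix l assume "l \<in> LfS (Hs C) (klen C)"
  then obtain i j where l: "l = (i, j)" "i \<in> Hs C" "1 \<le> j" "j \<le> klen C i" unfolding LfS_def by auto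
  show "\<exists>!r. (l, r) \<in> lin_arcs C"
    using l unfolding arcs_eq by auto
next
  fix r assume "r \<in> RtS (Ts C)"
  then obtain z where r: "r = (z, 0)" "z \<in> Ts C" unfolding RtS_def by auto
  then obtain c where c: "c \<in> C" "z \<in> set (tl c)" unfolding Ts_def by auto
  have cne: "c \<noteq> []" using cyc[OF c(1)] unfolding is_cycle_def by auto
  obtain m where m: "1 \<le> m" "m < length c" "c ! m = z" using tl_nth[OF cne] c by auto
  let ?i = "hd c"
  have mc: "min_cycle C ?i = c" using min_cycle_eq c by auto
  have iH: "?i \<in> Hs C" using c unfolding Hs_def by auto
  have kl: "klen C ?i + 1 = length c" using klen_len[OF iH] mc by simp
  have ex: "((?i, klen C ?i + 1 - m), r) \<in> lin_arcs C"
  proof -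
    have eqm: "klen C ?i + 1 - (klen C ?i + 1 - m) = m" using m kl by linarith
    have j1: "1 \<le> klen C ?i + 1 - m" "klen C ?i + 1 - m \<le> klen C ?i" using m kl by linarith+
    show ?thesis unfolding arcs_eq using eqm j1 iH r mc m by auto
  qed
  have un: "l = (?i, klen C ?i + 1 - m)" if l: "(l, r) \<in> lin_arcs C" for l
  proof -
    obtain i j where a: "(l, r) = ((i, j), (min_cycle C i ! (klen C i + 1 - j), 0::nat))" "i \<in> Hs C"
      "1 \<le> j" "j \<le> klen C i" using l unfolding arcs_eq by auto
    let ?c = "min_cycle C i"
    have c2: "?c \<in> C" "hd ?c = i" using min_cycle_in a by auto
    have l2: "length ?c = klen C i + 1" using klen_len a by auto
    have "?c ! (klen C i + 1 - j) \<in> set (tl ?c)"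
      using tl_nth[of ?c] c2 l2 a cyc[OF c2(1)] unfolding is_cycle_def
      by (metis Nat.add_diff_assoc2 add.commute add_le_cancel_left diff_add_inverse2 diff_le_self le_add2 le_add_diff_inverse less_Suc_eq_le plus_1_eq_Suc)
    then have zz: "z \<in> set (tl ?c)" using a r by simp
    have cc: "?c = c" using tl_inj[OF c2(1) c(1) zz c(2)] .
    have "c ! (klen C i + 1 - j) = c ! m" using a r m cc by simp
    then have "klen C i + 1 - j = m"
      using nth_eq_iff_index_eq[of c] cyc[OF c(1)] m a cc kl l2 unfolding is_cycle_def by auto
    then show ?thesis using a cc c2 by auto
  qed
  show "\<exists>!l. (l, r) \<in> lin_arcs C" using ex un by blast
qed

lemma verts_sub: "verts_of C i \<subseteq> {i} \<times> {0..Suc (length (min_cycle C i))}"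
  unfolding verts_of_def Let_def by auto

lemma finV: "finite (lin_vertices n C)"
  unfolding lin_vertices_def
  by (intro finite_UN_I) (auto intro: finite_subset[OF verts_sub])

lemma iso_sub: "isolated_vertices C \<subseteq> lin_vertices n C"
  unfolding iso_eq lin_vertices_eq VV_def by auto

end

lemma VV_H: "(i, 1) \<in> VV H T k \<longleftrightarrow> i \<in> H"
  by (auto simp: VV_def)

lemma VV_T: "(i, 0) \<in> VV H T k \<longleftrightarrow> i \<in> T"
  by (auto simp: VV_def)

lemma VV_j: "i \<in> H \<Longrightarrow> 1 \<le> j \<Longrightarrow> (i, j) \<in> VV H T k \<longleftrightarrow> j \<le> max 1 (k i)"
  by (auto simp: VV_def)

lemma lab_determines:
  assumes C: "lcyc n C" and D: "lcyc n D" and eq: "vertex_labeling n C = vertex_labeling n D"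
  shows "Hs C = Hs D" "Ts C = Ts D" "\<forall>i\<in>Hs C. klen C i = klen D i"
proof -
  have m: "\<And>E. map (\<lambda>l. (fst l, fst (snd l))) (vertex_labeling n E) = sorted_list_of_set (lin_vertices n E)"
    unfolding vertex_labeling_def by (simp add: comp_def)
  have fC: "finite (lin_vertices n C)" using lcyc.finV[OF C] .
  have fD: "finite (lin_vertices n D)" using lcyc.finV[OF D] .
  have VE: "lin_vertices n C = lin_vertices n D"
  proof -
    have "sorted_list_of_set (lin_vertices n C) = sorted_list_of_set (lin_vertices n D)"
      using m[of C] m[of D] eq by simp
    then have "set (sorted_list_of_set (lin_vertices n C)) = set (sorted_list_of_set (lin_vertices n D))"
      by simp
    then show ?thesis using fC fD by simp
  qed
  have isoL: "\<And>E v. lcyc n E \<Longrightarrow> v \<in> isolated_vertices E \<longleftrightarrow> (fst v, snd v, True) \<in> set (vertex_labeling n E)"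
  proof -
    fix E v assume E: "lcyc n E"
    have "set (vertex_labeling n E) = (\<lambda>v. (fst v, snd v, v \<in> isolated_vertices E)) ` lin_vertices n E"
      unfolding vertex_labeling_def using lcyc.finV[OF E] by simp
    then show "v \<in> isolated_vertices E \<longleftrightarrow> (fst v, snd v, True) \<in> set (vertex_labeling n E)"
      using lcyc.iso_sub[OF E] by auto
  qed
  have IE: "isolated_vertices C = isolated_vertices D"
  proof (rule set_eqI)
    fix v show "v \<in> isolated_vertices C \<longleftrightarrow> v \<in> isolated_vertices D"
      using isoL[OF C, of v] isoL[OF D, of v] eq by simp
  qed
  have VV: "VV (Hs C) (Ts C) (klen C) = VV (Hs D) (Ts D) (klen D)"
    using VE lcyc.lin_vertices_eq[OF C] lcyc.lin_vertices_eq[OF D] by simp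
  show H: "Hs C = Hs D"
  proof (rule set_eqI)
    fix i show "i \<in> Hs C \<longleftrightarrow> i \<in> Hs D"
      using VV_H[of i "Hs C" "Ts C" "klen C"] VV_H[of i "Hs D" "Ts D" "klen D"] VV by simp
  qed
  show "Ts C = Ts D"
  proof (rule set_eqI)
    fix i show "i \<in> Ts C \<longleftrightarrow> i \<in> Ts D"
      using VV_T[of i "Hs C" "Ts C" "klen C"] VV_T[of i "Hs D" "Ts D" "klen D"] VV by simp
  qed
  show "\<forall>i\<in>Hs C. klen C i = klen D i"
  proof
    fix i assume i: "i \<in> Hs C"
    have iD: "i \<in> Hs D" using i H by simp
    have "max 1 (klen C i) \<le> max 1 (klen D i)"
      using VV_j[of i "Hs C" "max 1 (klen C i)" "Ts C" "klen C"] VV_j[of i "Hs D" "max 1 (klen C i)" "Ts D" "klen D"] i iD VV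
      by simp
    moreover have "max 1 (klen D i) \<le> max 1 (klen C i)"
      using VV_j[of i "Hs C" "max 1 (klen D i)" "Ts C" "klen C"] VV_j[of i "Hs D" "max 1 (klen D i)" "Ts D" "klen D"] i iD VV
      by simp
    moreover have "klen C i = 0 \<longleftrightarrow> klen D i = 0"
      using IE lcyc.iso_eq[OF C] lcyc.iso_eq[OF D] i iD by auto
    ultimately show "klen C i = klen D i" by (auto simp: max_def split: if_splits)
  qed
qed

locale constr = lcyc n P for n P +
  fixes M
  assumes Mm: "M \<in> matchings (LfS (Hs P) (klen P)) (RtS (Ts P))"
begin

abbreviation "Lf \<equiv> LfS (Hs P) (klen P)"
abbreviation "Rt \<equiv> RtS (Ts P)"

definition tg :: "nat \<times> nat \<Rightarrow> nat" where "tg v = fst (THE r. (v, r) \<in> M)"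

lemma uniqR: "(l, r) \<in> M \<Longrightarrow> (l, r') \<in> M \<Longrightarrow> r = r'"
proof -
  assume a: "(l, r) \<in> M" "(l, r') \<in> M"
  then have "l \<in> Lf" using matchingsD(1)[OF Mm] by auto
  then have "\<exists>!r. (l, r) \<in> M" using matchingsD(3)[OF Mm] by simp
  then show ?thesis using the1_equality[of "\<lambda>r. (l, r) \<in> M"] a by metis
qed

lemma uniqL: "(l, r) \<in> M \<Longrightarrow> (l', r) \<in> M \<Longrightarrow> l = l'"
proof -
  assume a: "(l, r) \<in> M" "(l', r) \<in> M"
  then have "r \<in> Rt" using matchingsD(1)[OF Mm] by auto
  then have "\<exists>!l. (l, r) \<in> M" using matchingsD(4)[OF Mm] by simp
  then show ?thesis using the1_equality[of "\<lambda>l. (l, r) \<in> M"] a by metis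
qed

lemma tg_in: "v \<in> Lf \<Longrightarrow> (v, (tg v, 0)) \<in> M"
proof -
  assume v: "v \<in> Lf"
  have "\<exists>!r. (v, r) \<in> M" using matchingsD(3)[OF Mm v] .
  then obtain r where r: "(v, r) \<in> M" by (elim ex1E) simp
  have th: "(THE r. (v, r) \<in> M) = r" by (rule the_equality[where P="\<lambda>r. (v, r) \<in> M", OF r]) (rule uniqR[OF _ r])
  have "r \<in> Rt" using matchingsD(1)[OF Mm] r by auto
  then obtain z where "r = (z, 0)" unfolding RtS_def by auto
  then show ?thesis using r th unfolding tg_def by simp
qed

lemma tg_unique: "(v, r) \<in> M \<Longrightarrow> r = (tg v, 0)"
proof -
  assume a: "(v, r) \<in> M"
  then have v: "v \<in> Lf" using matchingsD(1)[OF Mm] by auto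
  show ?thesis using uniqR[OF a tg_in[OF v]] .
qed

lemma tg_T: "v \<in> Lf \<Longrightarrow> tg v \<in> Ts P"
  using tg_in matchingsD(1)[OF Mm] unfolding RtS_def by fastforce

lemma tg_gt: "v \<in> Lf \<Longrightarrow> fst v < tg v"
proof -
  assume v: "v \<in> Lf"
  have "v < (tg v, 0)" using matchingsD(2)[OF Mm tg_in[OF v]] by simp
  then show ?thesis by (cases v) auto
qed

lemma tg_inj: "inj_on tg Lf"
proof (rule inj_onI)
  fix v w assume a: "v \<in> Lf" "w \<in> Lf" "tg v = tg w"
  have r: "(tg v, 0) \<in> Rt" using tg_T[OF a(1)] unfolding RtS_def by auto
  show "v = w" using tg_in[OF a(1)] tg_in[OF a(2)] a(3) uniqL by simp
qed

lemma tg_surj: "tg ` Lf = Ts P"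
proof
  show "tg ` Lf \<subseteq> Ts P" using tg_T by auto
  show "Ts P \<subseteq> tg ` Lf"
  proof
    fix z assume z: "z \<in> Ts P"
    then have "(z, 0) \<in> Rt" unfolding RtS_def by auto
    then obtain l where l: "(l, (z, 0)) \<in> M" using matchingsD(4)[OF Mm] by blast
    then have "l \<in> Lf" using matchingsD(1)[OF Mm] by auto
    moreover have "tg l = z" using tg_unique[OF l] by simp
    ultimately show "z \<in> tg ` Lf" by auto
  qed
qed

definition cyc :: "nat \<Rightarrow> nat list" where
  "cyc i = i # rev (map (\<lambda>j. tg (i, j)) [1..<klen P i + 1])"

lemma cyc_len: "length (cyc i) = klen P i + 1"
  unfolding cyc_def by simp

lemma cyc_hd: "hd (cyc i) = i"
  unfolding cyc_def by simp

lemma cyc_nth: "1 \<le> m \<Longrightarrow> m \<le> klen P i \<Longrightarrow> cyc i ! m = tg (i, klen P i + 1 - m)"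
proof -
  assume m: "1 \<le> m" "m \<le> klen P i"
  obtain m' where m': "m = Suc m'" using m by (cases m) auto
  have "cyc i ! m = rev (map (\<lambda>j. tg (i, j)) [1..<klen P i + 1]) ! m'" unfolding cyc_def m' by simp
  also have "\<dots> = map (\<lambda>j. tg (i, j)) [1..<klen P i + 1] ! (length (map (\<lambda>j. tg (i, j)) [1..<klen P i + 1]) - Suc m')"
    by (rule rev_nth) (use m m' in simp)
  also have "\<dots> = map (\<lambda>j. tg (i, j)) [1..<klen P i + 1] ! (klen P i - Suc m')"
    by (simp only: length_map length_upt) simp
  also have "\<dots> = tg (i, [1..<klen P i + 1] ! (klen P i - Suc m'))"
    by (rule nth_map) (use m m' in simp)
  also have "[1..<klen P i + 1] ! (klen P i - Suc m') = 1 + (klen P i - Suc m')"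
    by (rule nth_upt) (use m m' in simp)
  also have "1 + (klen P i - Suc m') = klen P i + 1 - m" using m m' by simp
  finally show ?thesis .
qed

lemma cyc_tl: "set (tl (cyc i)) = (\<lambda>j. tg (i, j)) ` {1..klen P i}"
  unfolding cyc_def by auto

lemma cyc_set: "set (cyc i) = insert i ((\<lambda>j. tg (i, j)) ` {1..klen P i})"
  unfolding cyc_def by auto

lemma Lf_mem: "i \<in> Hs P \<Longrightarrow> j \<in> {1..klen P i} \<Longrightarrow> (i, j) \<in> Lf"
  unfolding LfS_def by auto

lemma cyc_is: "i \<in> Hs P \<Longrightarrow> is_cycle (cyc i)"
proof -
  assume i: "i \<in> Hs P"
  have gt: "\<And>z. z \<in> set (tl (cyc i)) \<Longrightarrow> i < z"
  proof -
    fix z assume "z \<in> set (tl (cyc i))"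
    then obtain j where j: "j \<in> {1..klen P i}" "z = tg (i, j)" unfolding cyc_tl by auto
    show "i < z" using tg_gt[OF Lf_mem[OF i j(1)]] j(2) by simp
  qed
  have inj: "inj_on (\<lambda>j. tg (i, j)) {1..klen P i}"
  proof (rule inj_onI)
    fix a b assume ab: "a \<in> {1..klen P i}" "b \<in> {1..klen P i}" "tg (i, a) = tg (i, b)"
    have "(i, a) = (i, b)" using inj_onD[OF tg_inj ab(3) Lf_mem[OF i ab(1)] Lf_mem[OF i ab(2)]] .
    then show "a = b" by simp
  qed
  have d1: "distinct (map (\<lambda>j. tg (i, j)) [1..<klen P i + 1])"
  proof -
    have s1: "set [1..<klen P i + 1] = {1..klen P i}" by auto
    show ?thesis unfolding distinct_map s1 using inj by simp
  qed
  have "i \<notin> set (tl (cyc i))" using gt by auto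
  then have d: "distinct (cyc i)" using d1 unfolding cyc_def by simp
  have "Min (set (cyc i)) = i"
  proof (rule Min_eqI)
    show "finite (set (cyc i))" by simp
    show "i \<in> set (cyc i)" unfolding cyc_def by simp
    fix z assume "z \<in> set (cyc i)"
    then have "z = i \<or> z \<in> set (tl (cyc i))" unfolding cyc_def by auto
    then show "i \<le> z" using gt less_imp_le by blast
  qed
  moreover have "cyc i \<noteq> []" unfolding cyc_def by simp
  ultimately show ?thesis unfolding is_cycle_def using d cyc_hd[of i] by simp
qed

definition Cn :: "nat list set" where "Cn = cyc ` Hs P"

end

lemma VV_cong: "\<forall>i\<in>H. k1 i = k2 i \<Longrightarrow> VV H T k1 = VV H T k2"
  unfolding VV_def by fastforce

context constr begin

lemma cyc_Min': "i \<in> Hs P \<Longrightarrow> Min (set (cyc i)) = i"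
  using cyc_Min[OF cyc_is] cyc_hd by simp

lemma cyc_sub: "i \<in> Hs P \<Longrightarrow> set (cyc i) \<subseteq> {1..n}"
proof -
  assume i: "i \<in> Hs P"
  have "tg (i, j) \<in> {1..n}" if "j \<in> {1..klen P i}" for j
    using tg_T[OF Lf_mem[OF i that]] HT_sub by auto
  then show ?thesis unfolding cyc_set using i HT_sub by auto
qed

lemma cyc_card: "i \<in> Hs P \<Longrightarrow> card (set (cyc i)) = klen P i + 1"
  using cyc_is[unfolded is_cycle_def] distinct_card cyc_len by metis

lemma Cn_nd:
  assumes i: "i \<in> Hs P" and i': "i' \<in> Hs P" and ne: "i \<noteq> i'"
  shows "nearly_disjoint (set (cyc i)) (set (cyc i'))"
  unfolding nearly_disjoint_def
proof
  fix z assume z: "z \<in> set (cyc i) \<inter> set (cyc i')"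
  have M1: "Min (set (cyc i)) = i" and M2: "Min (set (cyc i')) = i'" using cyc_Min' i i' by auto
  have zE: "z = i \<or> (\<exists>j\<in>{1..klen P i}. z = tg (i, j))" using z unfolding cyc_set by auto
  have zF: "z = i' \<or> (\<exists>j\<in>{1..klen P i'}. z = tg (i', j))" using z unfolding cyc_set by auto
  show "(z = Min (set (cyc i)) \<and> card (set (cyc i)) > 1 \<and> z \<noteq> Min (set (cyc i'))) \<or>
        (z = Min (set (cyc i')) \<and> card (set (cyc i')) > 1 \<and> z \<noteq> Min (set (cyc i)))"
  proof (cases "z = i")
    case True
    then have "z \<noteq> i'" using ne by simp
    then obtain j where j: "j \<in> {1..klen P i'}" "z = tg (i', j)" using zF by auto
    have "i \<in> Ts P" using tg_T[OF Lf_mem[OF i' j(1)]] j True by simp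
    then have "klen P i \<ge> 1" using klen_pos i by simp
    then have "card (set (cyc i)) > 1" using cyc_card[OF i] by simp
    then show ?thesis using True M1 M2 ne by simp
  next
    case False
    then obtain j where j: "j \<in> {1..klen P i}" "z = tg (i, j)" using zE by auto
    show ?thesis
    proof (cases "z = i'")
      case True
      have "i' \<in> Ts P" using tg_T[OF Lf_mem[OF i j(1)]] j True by simp
      then have "klen P i' \<ge> 1" using klen_pos i' by simp
      then have "card (set (cyc i')) > 1" using cyc_card[OF i'] by simp
      then show ?thesis using True M1 M2 ne by simp
    next
      case False2: False
      then obtain j' where j': "j' \<in> {1..klen P i'}" "z = tg (i', j')" using zF by auto
      have "(i, j) = (i', j')" using inj_onD[OF tg_inj _ Lf_mem[OF i j(1)] Lf_mem[OF i' j'(1)]] j j' by simp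
      then show ?thesis using ne by simp
    qed
  qed
qed

lemma Cn_lc: "linked_cycle n Cn"
  unfolding linked_cycle_def
proof (intro conjI)
  show "\<forall>c\<in>Cn. is_cycle c" unfolding Cn_def using cyc_is by auto
  show inj: "inj_on set Cn"
  proof (rule inj_onI)
    fix a b assume "a \<in> Cn" "b \<in> Cn" "set a = set b"
    then obtain i i' where "i \<in> Hs P" "i' \<in> Hs P" "a = cyc i" "b = cyc i'" "set (cyc i) = set (cyc i')"
      unfolding Cn_def by auto
    then show "a = b" using cyc_Min' by metis
  qed
  have b1: "\<forall>B\<in>set ` Cn. B \<noteq> {} \<and> B \<subseteq> {1..n}"
  proof
    fix B assume "B \<in> set ` Cn"
    then obtain i where i: "i \<in> Hs P" "B = set (cyc i)" unfolding Cn_def by auto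
    show "B \<noteq> {} \<and> B \<subseteq> {1..n}" using cyc_sub[OF i(1)] i unfolding cyc_def by auto
  qed
  have b2: "\<Union> (set ` Cn) = {1..n}"
  proof
    show "\<Union> (set ` Cn) \<subseteq> {1..n}" unfolding Cn_def using cyc_sub by auto
    show "{1..n} \<subseteq> \<Union> (set ` Cn)"
    proof
      fix x assume "x \<in> {1..n}"
      then have "x \<in> Hs P \<or> x \<in> Ts P" using cover by auto
      then show "x \<in> \<Union> (set ` Cn)"
      proof
        assume x: "x \<in> Hs P"
        then show ?thesis unfolding Cn_def cyc_def by auto
      next
        assume "x \<in> Ts P"
        then have "x \<in> tg ` Lf" using tg_surj by simp
        then obtain v where v: "v \<in> Lf" "x = tg v" by (rule imageE) simp
        then obtain i j where ij: "v = (i, j)" "i \<in> Hs P" "j \<in> {1..klen P i}" unfolding LfS_def by auto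
        then have "x \<in> set (cyc i)" unfolding cyc_set using v by auto
        then show ?thesis unfolding Cn_def using ij by auto
      qed
    qed
  qed
  have b3: "\<forall>E\<in>set ` Cn. \<forall>F\<in>set ` Cn. E \<noteq> F \<longrightarrow> nearly_disjoint E F"
  proof (intro ballI impI)
    fix E F assume EF: "E \<in> set ` Cn" "F \<in> set ` Cn" "E \<noteq> F"
    then obtain i i' where "i \<in> Hs P" "i' \<in> Hs P" "E = set (cyc i)" "F = set (cyc i')"
      unfolding Cn_def by auto
    then show "nearly_disjoint E F" using Cn_nd EF(3) by blast
  qed
  show "linked_partition n (set ` Cn)"
    unfolding linked_partition_def using b1 b2 b3 by blast
qed

lemma Cn_lcyc: "lcyc n Cn"
  using Cn_lc by (simp add: lcyc_def)

lemma Cn_Hs: "Hs Cn = Hs P"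
  unfolding Hs_def Cn_def by (auto simp: image_image cyc_hd)

lemma Cn_Ts: "Ts Cn = Ts P"
proof -
  have "Ts Cn = (\<Union>i\<in>Hs P. (\<lambda>j. tg (i, j)) ` {1..klen P i})"
    unfolding Ts_def Cn_def by (simp add: cyc_tl)
  also have "\<dots> = tg ` Lf" unfolding LfS_def by auto
  finally show ?thesis using tg_surj by simp
qed

lemma Cn_min: "i \<in> Hs P \<Longrightarrow> min_cycle Cn i = cyc i"
  using lcyc.min_cycle_eq[OF Cn_lcyc, of "cyc i"] cyc_hd unfolding Cn_def by auto

lemma Cn_klen: "i \<in> Hs P \<Longrightarrow> klen Cn i = klen P i"
  unfolding klen_def[of Cn] using Cn_min cyc_len klen_def by simp

lemma Cn_label: "vertex_labeling n Cn = vertex_labeling n P"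
proof -
  have "lin_vertices n Cn = lin_vertices n P"
    using lcyc.lin_vertices_eq[OF Cn_lcyc] lin_vertices_eq Cn_Hs Cn_Ts Cn_klen VV_cong by metis
  moreover have "isolated_vertices Cn = isolated_vertices P"
    using lcyc.iso_eq[OF Cn_lcyc] iso_eq Cn_Hs Cn_klen by auto
  ultimately show ?thesis unfolding vertex_labeling_def by simp
qed

lemma Cn_arcs: "lin_arcs Cn = M"
proof -
  have "lin_arcs Cn = {((i, j), (min_cycle Cn i ! (klen Cn i + 1 - j), 0::nat)) | i j.
     i \<in> Hs Cn \<and> 1 \<le> j \<and> j \<le> klen Cn i}" using lcyc.arcs_eq[OF Cn_lcyc] .
  also have "\<dots> = {((i, j), (tg (i, j), 0::nat)) | i j. i \<in> Hs P \<and> 1 \<le> j \<and> j \<le> klen P i}"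
  proof -
    have "\<And>i j. i \<in> Hs P \<Longrightarrow> 1 \<le> j \<Longrightarrow> j \<le> klen P i \<Longrightarrow>
        min_cycle Cn i ! (klen Cn i + 1 - j) = tg (i, j)"
    proof -
      fix i j assume a: "i \<in> Hs P" "1 \<le> j" "j \<le> klen P i"
      have "min_cycle Cn i ! (klen Cn i + 1 - j) = cyc i ! (klen P i + 1 - j)"
        using Cn_min Cn_klen a by simp
      also have "\<dots> = tg (i, klen P i + 1 - (klen P i + 1 - j))"
        by (rule cyc_nth) (use a in auto)
      also have "klen P i + 1 - (klen P i + 1 - j) = j" using a by simp
      finally show "min_cycle Cn i ! (klen Cn i + 1 - j) = tg (i, j)" .
    qed
    then show ?thesis using Cn_Hs Cn_klen by (auto; metis)
  qed
  also have "\<dots> = M"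
  proof (rule set_eqI, rule iffI)
    fix a assume "a \<in> {((i, j), (tg (i, j), 0::nat)) | i j. i \<in> Hs P \<and> 1 \<le> j \<and> j \<le> klen P i}"
    then obtain i j where a: "a = ((i, j), (tg (i, j), 0))" "i \<in> Hs P" "1 \<le> j" "j \<le> klen P i" by auto
    then have "(i, j) \<in> Lf" unfolding LfS_def by auto
    then show "a \<in> M" using tg_in a by simp
  next
    fix a assume a: "a \<in> M"
    obtain v r where vr: "a = (v, r)" by (cases a) blast
    have v: "v \<in> Lf" using a vr matchingsD(1)[OF Mm] by auto
    have r: "r = (tg v, 0)" using tg_unique a vr by simp
    obtain i j where "v = (i, j)" "i \<in> Hs P" "1 \<le> j" "j \<le> klen P i" using v unfolding LfS_def by auto
    then show "a \<in> {((i, j), (tg (i, j), 0::nat)) | i j. i \<in> Hs P \<and> 1 \<le> j \<and> j \<le> klen P i}"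
      using vr r by auto
  qed
  finally show ?thesis .
qed

end

lemma strict_nth_iff:
  assumes s: "sorted_wrt (<) (xs :: ('b::linorder) list)" and p: "p < length xs" and q: "q < length xs"
  shows "xs ! p < xs ! q \<longleftrightarrow> p < q"
proof
  assume "p < q" then show "xs ! p < xs ! q" using sorted_wrt_nth_less[OF s _ q] by simp
next
  assume a: "xs ! p < xs ! q"
  show "p < q"
  proof (rule ccontr)
    assume "\<not> p < q"
    then have "q < p \<or> q = p" by auto
    then show False
    proof
      assume "q < p" then have "xs ! q < xs ! p" using sorted_wrt_nth_less[OF s _ p] by simp
      then show False using a by simp
    next
      assume "q = p" then show False using a by simp
    qed
  qed
qed

lemma count_after:
  fixes V :: "('b::linorder) set"
  assumes fin: "finite V" and S: "S \<subseteq> V" and p: "p < length (sorted_list_of_set V)"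
  shows "card {q. p < q \<and> q < length (sorted_list_of_set V) \<and> sorted_list_of_set V ! q \<in> S}
       = card {s\<in>S. sorted_list_of_set V ! p < s}"
proof -
  let ?xs = "sorted_list_of_set V"
  have s: "sorted_wrt (<) ?xs" by (rule strict_sorted_list_of_set)
  have d: "distinct ?xs" using fin by simp
  have sv: "set ?xs = V" using fin by simp
  let ?Q = "{q. p < q \<and> q < length ?xs \<and> ?xs ! q \<in> S}"
  have inj: "inj_on (nth ?xs) ?Q" using d by (auto simp: inj_on_def nth_eq_iff_index_eq)
  have im: "nth ?xs ` ?Q = {s\<in>S. ?xs ! p < s}"
  proof
    show "nth ?xs ` ?Q \<subseteq> {s\<in>S. ?xs ! p < s}" using strict_nth_iff[OF s p] by auto
    show "{s\<in>S. ?xs ! p < s} \<subseteq> nth ?xs ` ?Q"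
    proof
      fix z assume z: "z \<in> {s\<in>S. ?xs ! p < s}"
      then have "z \<in> set ?xs" using S sv by auto
      then obtain q where q: "q < length ?xs" "?xs ! q = z" by (auto simp: in_set_conv_nth)
      then have "p < q" using strict_nth_iff[OF s p q(1)] z by auto
      then show "z \<in> nth ?xs ` ?Q" using q z by auto
    qed
  qed
  show ?thesis using card_image[OF inj] im by simp
qed

lemma lc_inj:
  assumes C: "lcyc n C" and D: "lcyc n D" and H: "Hs C = Hs D" and K: "\<forall>i\<in>Hs C. klen C i = klen D i"
    and A: "lin_arcs C = lin_arcs D"
  shows "C = D"
proof -
  have mc: "\<And>i. i \<in> Hs C \<Longrightarrow> min_cycle C i = min_cycle D i"
  proof -
    fix i assume i: "i \<in> Hs C"
    have iD: "i \<in> Hs D" using i H by simp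
    let ?c = "min_cycle C i" and ?d = "min_cycle D i"
    have lc: "length ?c = klen C i + 1" using lcyc.klen_len[OF C i] .
    have ld: "length ?d = klen C i + 1" using lcyc.klen_len[OF D iD] K i by simp
    show "?c = ?d"
    proof (rule nth_equalityI)
      show "length ?c = length ?d" using lc ld by simp
      fix m assume m: "m < length ?c"
      show "?c ! m = ?d ! m"
      proof (cases "m = 0")
        case True
        have cn: "?c \<noteq> []" using lc by auto
        have dn: "?d \<noteq> []" using ld by auto
        have "?c ! 0 = i" using lcyc.min_cycle_in[OF C i] hd_conv_nth[OF cn] by simp
        moreover have "?d ! 0 = i" using lcyc.min_cycle_in[OF D iD] hd_conv_nth[OF dn] by simp
        ultimately show ?thesis using True by simp
      next
        case False
        let ?j = "klen C i + 1 - m"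
        have j: "1 \<le> ?j" "?j \<le> klen C i" using m False lc by auto
        have mm: "klen C i + 1 - ?j = m" using m lc by auto
        have "((i, ?j), (?c ! m, 0::nat)) \<in> lin_arcs C"
          unfolding lcyc.arcs_eq[OF C]
          by (rule CollectI, rule exI[of _ i], rule exI[of _ ?j]) (use i j mm in simp)
        then have "((i, ?j), (?c ! m, 0::nat)) \<in> lin_arcs D" using A by simp
        then obtain i' j' where e: "((i, ?j), (?c ! m, 0::nat)) = ((i', j'), (min_cycle D i' ! (klen D i' + 1 - j'), 0))"
          "i' \<in> Hs D" unfolding lcyc.arcs_eq[OF D] by (elim CollectE exE conjE) blast
        then have "i' = i" "j' = ?j" by auto
        then have "?c ! m = ?d ! (klen D i + 1 - ?j)" using e by simp
        also have "klen D i + 1 - ?j = m" using mm K i by simp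
        finally show ?thesis .
      qed
    qed
  qed
  have "C = min_cycle C ` Hs C" using lcyc.min_cycle_eq[OF C] unfolding Hs_def by (auto simp: image_image)
  also have "\<dots> = min_cycle D ` Hs D" using mc H by simp
  also have "\<dots> = D" using lcyc.min_cycle_eq[OF D] unfolding Hs_def by (auto simp: image_image)
  finally show ?thesis .
qed

lemma LfS_cong: "\<forall>i\<in>H. k1 i = k2 i \<Longrightarrow> LfS H k1 = LfS H k2"
  unfolding LfS_def by fastforce

theorem theorem4p9:
  fixes n :: nat and \<pi>0 :: "nat list set" and x y :: "'a::comm_ring_1"
  assumes "n \<ge> 1"
    and "linked_cycle n \<pi>0"
  defines "L \<equiv> vertex_labeling n \<pi>0"
  shows "(\<Sum>\<pi> \<in> LC n L. x ^ cr2 \<pi> * y ^ ne2 \<pi>) = (\<Sum>\<pi> \<in> LC n L. x ^ ne2 \<pi> * y ^ cr2 \<pi>)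
       \<and> (\<Sum>\<pi> \<in> LC n L. x ^ ne2 \<pi> * y ^ cr2 \<pi>)
           = (\<Prod>p \<in> {p. p < length L \<and> is_left_end (L ! p)}. hpoly (hval L p) x y)"
proof -
  have P: "lcyc n \<pi>0" using assms(2) by (simp add: lcyc_def)
  define Lf0 where "Lf0 = LfS (Hs \<pi>0) (klen \<pi>0)"
  define Rt0 where "Rt0 = RtS (Ts \<pi>0)"
  have img: "lin_arcs ` LC n L = matchings Lf0 Rt0"
  proof
    show "lin_arcs ` LC n L \<subseteq> matchings Lf0 Rt0"
    proof
      fix M assume "M \<in> lin_arcs ` LC n L"
      then obtain C where C: "C \<in> LC n L" "M = lin_arcs C" by auto
      have Cl: "lcyc n C" using C unfolding LC_def by (simp add: lcyc_def)
      have lab: "vertex_labeling n C = vertex_labeling n \<pi>0" using C unfolding LC_def L_def by simp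
      note e = lab_determines[OF Cl P lab]
      have "LfS (Hs C) (klen C) = LfS (Hs \<pi>0) (klen \<pi>0)"
        using e(1) LfS_cong[OF e(3)] by simp
      moreover have "RtS (Ts C) = Rt0" unfolding Rt0_def using e(2) by simp
      ultimately show "M \<in> matchings Lf0 Rt0" using lcyc.arcs_matching[OF Cl] C(2) unfolding Lf0_def by simp
    qed
    show "matchings Lf0 Rt0 \<subseteq> lin_arcs ` LC n L"
    proof
      fix M assume M: "M \<in> matchings Lf0 Rt0"
      interpret constr n \<pi>0 M
        using P M unfolding Lf0_def Rt0_def by (simp add: constr_def constr_axioms_def)
      have "Cn \<in> LC n L" using Cn_lc Cn_label unfolding LC_def L_def by simp
      then show "M \<in> lin_arcs ` LC n L" using Cn_arcs by force
    qed
  qed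
  have inj: "inj_on lin_arcs (LC n L)"
  proof (rule inj_onI)
    fix C D assume C: "C \<in> LC n L" and D: "D \<in> LC n L" and A: "lin_arcs C = lin_arcs D"
    have Cl: "lcyc n C" using C unfolding LC_def by (simp add: lcyc_def)
    have Dl: "lcyc n D" using D unfolding LC_def by (simp add: lcyc_def)
    have "vertex_labeling n C = vertex_labeling n D" using C D unfolding LC_def by simp
    note e = lab_determines[OF Cl Dl this]
    show "C = D" using lc_inj[OF Cl Dl e(1) e(3) A] .
  qed
  have sumeq: "\<And>f. (\<Sum>\<pi>\<in>LC n L. f (lin_arcs \<pi>)) = (\<Sum>M\<in>matchings Lf0 Rt0. f M)"
  proof -
    fix f
    have "(\<Sum>M\<in>matchings Lf0 Rt0. f M) = (\<Sum>M\<in>lin_arcs ` LC n L. f M)" using img by simp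
    also have "\<dots> = (\<Sum>\<pi>\<in>LC n L. f (lin_arcs \<pi>))" using sum.reindex[OF inj, of f] by (simp add: comp_def)
    finally show "(\<Sum>\<pi>\<in>LC n L. f (lin_arcs \<pi>)) = (\<Sum>M\<in>matchings Lf0 Rt0. f M)" by simp
  qed
  have cr: "\<And>\<pi>. cr2 \<pi> = crs (lin_arcs \<pi>)" "\<And>\<pi>. ne2 \<pi> = nes (lin_arcs \<pi>)"
    unfolding cr2_def crs_def ne2_def nes_def by rule+
  have M0: "lin_arcs \<pi>0 \<in> matchings Lf0 Rt0" using lcyc.arcs_matching[OF P] unfolding Lf0_def Rt0_def .
  have V0: "lin_vertices n \<pi>0 = VV (Hs \<pi>0) (Ts \<pi>0) (klen \<pi>0)" using lcyc.lin_vertices_eq[OF P] .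
  have I0: "isolated_vertices \<pi>0 = {(i, 1) | i. i \<in> Hs \<pi>0 \<and> klen \<pi>0 i = 0}" using lcyc.iso_eq[OF P] .
  have LfV: "Lf0 \<subseteq> lin_vertices n \<pi>0" unfolding V0 Lf0_def LfS_def VV_def by auto
  have RtV: "Rt0 \<subseteq> lin_vertices n \<pi>0" unfolding V0 Rt0_def RtS_def VV_def by auto
  have finV: "finite (lin_vertices n \<pi>0)" using lcyc.finV[OF P] .
  have finL: "finite Lf0" using finite_subset[OF LfV finV] .
  have finR: "finite Rt0" using finite_subset[OF RtV finV] .
  have card: "card Lf0 = card Rt0"
  proof -
    have "card Lf0 = card (lin_arcs \<pi>0)"
      using card_image[OF matching_inj_fst[OF M0]] matching_fst_image[OF M0] by simp
    also have "\<dots> = card Rt0"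
      using card_image[OF matching_inj_snd[OF M0]] matching_snd_image[OF M0] by simp
    finally show ?thesis .
  qed
  have gf: "\<And>x y :: 'a. (\<Sum>M\<in>matchings Lf0 Rt0. x ^ crs M * y ^ nes M) = (\<Prod>v\<in>Lf0. hpoly (habs Lf0 Rt0 v) x y)"
    using match_gf[OF finL finR card] by blast
  have prodpos: "(\<Prod>p \<in> {p. p < length L \<and> is_left_end (L ! p)}. hpoly (hval L p) x y)
      = (\<Prod>v\<in>Lf0. hpoly (habs Lf0 Rt0 v) x y)"
  proof -
    let ?V = "lin_vertices n \<pi>0"
    let ?xs = "sorted_list_of_set ?V"
    let ?g = "\<lambda>v. (fst v, snd v, v \<in> isolated_vertices \<pi>0)"
    have Ld: "L = map ?g ?xs" unfolding L_def vertex_labeling_def ..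
    have len: "length L = length ?xs" using Ld by simp
    have nth: "\<And>p. p < length ?xs \<Longrightarrow> L ! p = ?g (?xs ! p)" using Ld by simp
    have sxs: "set ?xs = ?V" using finV by simp
    have dxs: "distinct ?xs" using finV by simp
    have inV: "\<And>p. p < length ?xs \<Longrightarrow> ?xs ! p \<in> ?V" using sxs nth_mem by blast
    have clsL: "\<And>v. v \<in> ?V \<Longrightarrow> (1 \<le> snd v \<and> v \<notin> isolated_vertices \<pi>0) \<longleftrightarrow> v \<in> Lf0"
      unfolding V0 I0 VV_def Lf0_def LfS_def by (auto simp: max_def split: if_splits)
    have clsR: "\<And>v. v \<in> ?V \<Longrightarrow> snd v = 0 \<longleftrightarrow> v \<in> Rt0"
      unfolding V0 Rt0_def RtS_def VV_def by auto
    have left: "\<And>p. p < length ?xs \<Longrightarrow> is_left_end (L ! p) \<longleftrightarrow> ?xs ! p \<in> Lf0"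
      using nth inV clsL unfolding is_left_end_def by simp
    have right: "\<And>p. p < length ?xs \<Longrightarrow> is_right_end (L ! p) \<longleftrightarrow> ?xs ! p \<in> Rt0"
      using nth inV clsR unfolding is_right_end_def by simp
    have Pset: "{p. p < length L \<and> is_left_end (L ! p)} = {p. p < length ?xs \<and> ?xs ! p \<in> Lf0}"
      using len left by auto
    have bij: "bij_betw (nth ?xs) {p. p < length ?xs \<and> ?xs ! p \<in> Lf0} Lf0"
    proof (rule bij_betwI')
      show "\<And>a b. a \<in> {p. p < length ?xs \<and> ?xs ! p \<in> Lf0} \<Longrightarrow> b \<in> {p. p < length ?xs \<and> ?xs ! p \<in> Lf0}
          \<Longrightarrow> (?xs ! a = ?xs ! b) = (a = b)" using dxs by (auto simp: nth_eq_iff_index_eq)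
      show "\<And>a. a \<in> {p. p < length ?xs \<and> ?xs ! p \<in> Lf0} \<Longrightarrow> ?xs ! a \<in> Lf0" by simp
      fix v assume "v \<in> Lf0"
      then have "v \<in> set ?xs" using LfV sxs by auto
      then obtain p where "p < length ?xs" "?xs ! p = v" by (auto simp: in_set_conv_nth)
      then show "\<exists>p\<in>{p. p < length ?xs \<and> ?xs ! p \<in> Lf0}. v = ?xs ! p" using \<open>v \<in> Lf0\<close> by auto
    qed
    have hv: "\<And>p. p \<in> {p. p < length ?xs \<and> ?xs ! p \<in> Lf0} \<Longrightarrow> hval L p = habs Lf0 Rt0 (?xs ! p)"
    proof -
      fix p assume "p \<in> {p. p < length ?xs \<and> ?xs ! p \<in> Lf0}"
      then have p: "p < length ?xs" by simp
      have e1: "{q. p < q \<and> q < length L \<and> is_right_end (L ! q)} = {q. p < q \<and> q < length ?xs \<and> ?xs ! q \<in> Rt0}"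
        using len right by auto
      have e2: "{q. p < q \<and> q < length L \<and> is_left_end (L ! q)} = {q. p < q \<and> q < length ?xs \<and> ?xs ! q \<in> Lf0}"
        using len left by auto
      show "hval L p = habs Lf0 Rt0 (?xs ! p)"
        unfolding hval_def habs_def e1 e2 count_after[OF finV RtV p] count_after[OF finV LfV p] ..
    qed
    have "(\<Prod>p \<in> {p. p < length L \<and> is_left_end (L ! p)}. hpoly (hval L p) x y)
        = (\<Prod>p \<in> {p. p < length ?xs \<and> ?xs ! p \<in> Lf0}. hpoly (habs Lf0 Rt0 (?xs ! p)) x y)"
      unfolding Pset using hv by (intro prod.cong) auto
    also have "\<dots> = (\<Prod>v\<in>Lf0. hpoly (habs Lf0 Rt0 v) x y)"
      by (rule prod.reindex_bij_betw[OF bij])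
    finally show ?thesis .
  qed
  have S1: "(\<Sum>\<pi> \<in> LC n L. x ^ cr2 \<pi> * y ^ ne2 \<pi>) = (\<Prod>v\<in>Lf0. hpoly (habs Lf0 Rt0 v) x y)"
    unfolding cr sumeq[of "\<lambda>M. x ^ crs M * y ^ nes M"] gf ..
  have S2: "(\<Sum>\<pi> \<in> LC n L. x ^ ne2 \<pi> * y ^ cr2 \<pi>) = (\<Prod>v\<in>Lf0. hpoly (habs Lf0 Rt0 v) x y)"
  proof -
    have "(\<Sum>\<pi> \<in> LC n L. x ^ ne2 \<pi> * y ^ cr2 \<pi>) = (\<Sum>\<pi> \<in> LC n L. y ^ crs (lin_arcs \<pi>) * x ^ nes (lin_arcs \<pi>))"
      unfolding cr by (simp add: mult.commute)
    also have "\<dots> = (\<Sum>M\<in>matchings Lf0 Rt0. y ^ crs M * x ^ nes M)"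
      using sumeq[of "\<lambda>M. y ^ crs M * x ^ nes M"] by simp
    also have "\<dots> = (\<Prod>v\<in>Lf0. hpoly (habs Lf0 Rt0 v) y x)" using gf .
    also have "\<dots> = (\<Prod>v\<in>Lf0. hpoly (habs Lf0 Rt0 v) x y)" using hpoly_sym by metis
    finally show ?thesis .
  qed
  show ?thesis using S1 S2 prodpos by simp
qed

end
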